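(* For $n>2$, the assignment $\omega(a_{ij})=a_{ij}$ if $n+1\notin\{i,j\}$, $\omega(a_{i,n+1})=\tau_i$ for $i\le n$, extends to a well-defined group homomorphism $\omega\colon G_{n+1}^2\to G_{n,\mathcal{D}}^2$.
   Context: $G_{N}^2$ is the group with generators $a_{ij}=a_{\{i,j\}}$ for $2$-element subsets $\{i,j\}\subset\{1,\dots,N\}$ and relations $a_{ij}^2=1$; $a_{ij}a_{kl}=a_{kl}a_{ij}$ for distinct $i,j,k,l$; $a_{ij}a_{ik}a_{jk}=a_{jk}a_{ik}a_{ij}$ for distinct $i,j,k$. $G_{n,\mathcal{D}}^2$ has generators $a_{ij}$ ($\{i,j\}\subset\{1,\dots,n\}$) and $\tau_i$ ($1\le i\le n$) with relations: $a_{ij}^2=1$; $a_{ij}a_{kl}=a_{kl}a_{ij}$ for distinct $i,j,k,l$; $a_{ij}a_{ik}a_{jk}=a_{jk}a_{ik}a_{ij}$ for distinct $i,j,k$; $\tau_i^2=1$; $\tau_i\tau_j=\tau_j\tau_i$; $\tau_i\tau_ja_{ij}\tau_j\tau_i=a_{ij}$; $a_{ij}\tau_k=\tau_ka_{ij}$ for distinct $i,j,k$. *)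

theory Defs
  imports "HOL-Algebra.Group"
begin

text \<open>A word over generators of type 'a is a list of letters (x, True) = x and
  (x, False) = x^-1. A presentation is given by a set S of generators and a set R of
  relations, each relation being a pair of words (l, r) meaning l = r.\<close>

type_synonym 'a word = "('a \<times> bool) list"

definition words :: "'a set \<Rightarrow> 'a word set" where
  "words S = {w. \<forall>l \<in> set w. fst l \<in> S}"

inductive_set pres_rel :: "'a set \<Rightarrow> ('a word \<times> 'a word) set \<Rightarrow> ('a word \<times> 'a word) set"
  for S R where
  refl: "w \<in> words S \<Longrightarrow> (w, w) \<in> pres_rel S R"
| sym: "(u, v) \<in> pres_rel S R \<Longrightarrow> (v, u) \<in> pres_rel S R"
| trans: "(u, v) \<in> pres_rel S R \<Longrightarrow> (v, w) \<in> pres_rel S R \<Longrightarrow> (u, w) \<in> pres_rel S R"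
| cancel: "u \<in> words S \<Longrightarrow> v \<in> words S \<Longrightarrow> x \<in> S \<Longrightarrow>
     (u @ [(x, b), (x, \<not> b)] @ v, u @ v) \<in> pres_rel S R"
| rel: "u \<in> words S \<Longrightarrow> v \<in> words S \<Longrightarrow> (l, r) \<in> R \<Longrightarrow> l \<in> words S \<Longrightarrow> r \<in> words S \<Longrightarrow>
     (u @ l @ v, u @ r @ v) \<in> pres_rel S R"

definition presented_group :: "'a set \<Rightarrow> ('a word \<times> 'a word) set \<Rightarrow> 'a word set monoid" where
  "presented_group S R =
     \<lparr> carrier = words S // pres_rel S R,
       monoid.mult = (\<lambda>A B. pres_rel S R `` {(SOME a. a \<in> A) @ (SOME b. b \<in> B)}),
       one = pres_rel S R `` {[]} \<rparr>"

definition pgen :: "'a set \<Rightarrow> ('a word \<times> 'a word) set \<Rightarrow> 'a \<Rightarrow> 'a word set" where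
  "pgen S R x = pres_rel S R `` {[(x, True)]}"

abbreviation lt :: "'a \<Rightarrow> 'a \<times> bool" where "lt x \<equiv> (x, True)"

definition G2_gens :: "nat \<Rightarrow> nat set set" where
  "G2_gens N = {{i, j} | i j. 1 \<le> i \<and> i \<le> N \<and> 1 \<le> j \<and> j \<le> N \<and> i \<noteq> j}"

definition G2_rels :: "nat \<Rightarrow> (nat set word \<times> nat set word) set" where
  "G2_rels N =
     {([lt {i, j}, lt {i, j}], []) | i j. {i, j} \<in> G2_gens N}
   \<union> {([lt {i, j}, lt {k, l}], [lt {k, l}, lt {i, j}]) | i j k l.
        {i, j, k, l} \<subseteq> {1..N} \<and> card {i, j, k, l} = 4}
   \<union> {([lt {i, j}, lt {i, k}, lt {j, k}], [lt {j, k}, lt {i, k}, lt {i, j}]) | i j k.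
        {i, j, k} \<subseteq> {1..N} \<and> card {i, j, k} = 3}"

definition G2 :: "nat \<Rightarrow> nat set word set monoid" where
  "G2 N = presented_group (G2_gens N) (G2_rels N)"

definition G2_a :: "nat \<Rightarrow> nat \<Rightarrow> nat \<Rightarrow> nat set word set" where
  "G2_a N i j = pgen (G2_gens N) (G2_rels N) {i, j}"

datatype gD = A "nat set" | T nat

definition G2D_gens :: "nat \<Rightarrow> gD set" where
  "G2D_gens n = A ` G2_gens n \<union> T ` {1..n}"

definition G2D_rels :: "nat \<Rightarrow> (gD word \<times> gD word) set" where
  "G2D_rels n =
     {([lt (A {i, j}), lt (A {i, j})], []) | i j. {i, j} \<in> G2_gens n}
   \<union> {([lt (A {i, j}), lt (A {k, l})], [lt (A {k, l}), lt (A {i, j})]) | i j k l.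
        {i, j, k, l} \<subseteq> {1..n} \<and> card {i, j, k, l} = 4}
   \<union> {([lt (A {i, j}), lt (A {i, k}), lt (A {j, k})], [lt (A {j, k}), lt (A {i, k}), lt (A {i, j})])
        | i j k. {i, j, k} \<subseteq> {1..n} \<and> card {i, j, k} = 3}
   \<union> {([lt (T i), lt (T i)], []) | i. i \<in> {1..n}}
   \<union> {([lt (T i), lt (T j)], [lt (T j), lt (T i)]) | i j. i \<in> {1..n} \<and> j \<in> {1..n}}
   \<union> {([lt (T i), lt (T j), lt (A {i, j}), lt (T j), lt (T i)], [lt (A {i, j})]) | i j.
        {i, j} \<in> G2_gens n}
   \<union> {([lt (A {i, j}), lt (T k)], [lt (T k), lt (A {i, j})]) | i j k.
        {i, j, k} \<subseteq> {1..n} \<and> card {i, j, k} = 3}"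

definition G2D :: "nat \<Rightarrow> gD word set monoid" where
  "G2D n = presented_group (G2D_gens n) (G2D_rels n)"

definition G2D_a :: "nat \<Rightarrow> nat \<Rightarrow> nat \<Rightarrow> gD word set" where
  "G2D_a n i j = pgen (G2D_gens n) (G2D_rels n) (A {i, j})"

definition G2D_tau :: "nat \<Rightarrow> nat \<Rightarrow> gD word set" where
  "G2D_tau n i = pgen (G2D_gens n) (G2D_rels n) (T i)"

end

theory Submission
  imports Defs
begin

lemma words_simps[simp]: "[] \<in> words S" "(x # w \<in> words S) = (fst x \<in> S \<and> w \<in> words S)"
  "(u @ v \<in> words S) = (u \<in> words S \<and> v \<in> words S)"
  by (auto simp: words_def)

lemma pres_words: "(u, v) \<in> pres_rel S R \<Longrightarrow> u \<in> words S \<and> v \<in> words S"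
  by (induction rule: pres_rel.induct) auto

lemma pres_ctx: "(u, v) \<in> pres_rel S R \<Longrightarrow> x \<in> words S \<Longrightarrow> y \<in> words S \<Longrightarrow>
   (x @ u @ y, x @ v @ y) \<in> pres_rel S R"
proof (induction rule: pres_rel.induct)
  case (refl w) then show ?case by (intro pres_rel.refl) auto
next
  case (sym u v) then show ?case by (blast intro: pres_rel.sym)
next
  case (trans u v w) then show ?case by (blast intro: pres_rel.trans)
next
  case (cancel u v z b)
  then show ?case using pres_rel.cancel[of "x @ u" S "v @ y" z b R] by simp
next
  case (rel u v l r)
  then show ?case using pres_rel.rel[of "x @ u" S "v @ y" l r R] by simp
qed

lemma pres_app: "(u, u') \<in> pres_rel S R \<Longrightarrow> (v, v') \<in> pres_rel S R \<Longrightarrow> (u @ v, u' @ v') \<in> pres_rel S R"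
proof -
  assume a: "(u, u') \<in> pres_rel S R" "(v, v') \<in> pres_rel S R"
  have 1: "(u @ v, u' @ v) \<in> pres_rel S R" using pres_ctx[OF a(1), of "[]" v] pres_words[OF a(2)] by simp
  have 2: "(u' @ v, u' @ v') \<in> pres_rel S R" using pres_ctx[OF a(2), of u' "[]"] pres_words[OF a(1)] by simp
  show ?thesis using 1 2 by (rule pres_rel.trans)
qed

definition lmap :: "('a \<Rightarrow> 'b) \<Rightarrow> 'a word \<Rightarrow> 'b word" where
  "lmap h w = map (\<lambda>(x, b). (h x, b)) w"

lemma lmap_simps[simp]: "lmap h [] = []" "lmap h ((x, b) # w) = (h x, b) # lmap h w"
  "lmap h (u @ v) = lmap h u @ lmap h v"
  by (auto simp: lmap_def)

lemma lmap_words: "h ` S \<subseteq> S' \<Longrightarrow> w \<in> words S \<Longrightarrow> lmap h w \<in> words S'"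
  by (induction w) auto

lemma pres_map:
  assumes hS: "h ` S \<subseteq> S'"
    and hR: "\<And>l r. (l, r) \<in> R \<Longrightarrow> l \<in> words S \<Longrightarrow> r \<in> words S \<Longrightarrow> (lmap h l, lmap h r) \<in> pres_rel S' R'"
  shows "(u, v) \<in> pres_rel S R \<Longrightarrow> (lmap h u, lmap h v) \<in> pres_rel S' R'"
proof (induction rule: pres_rel.induct)
  case (refl w) then show ?case by (intro pres_rel.refl lmap_words[OF hS])
next
  case (sym u v) then show ?case by (blast intro: pres_rel.sym)
next
  case (trans u v w) then show ?case by (blast intro: pres_rel.trans)
next
  case (cancel u v x b)
  then show ?case using pres_rel.cancel[of "lmap h u" S' "lmap h v" "h x" b R'] lmap_words[OF hS] hS by auto
next
  case (rel u v l r)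
  then show ?case using pres_ctx[OF hR[of l r], of "lmap h u" "lmap h v"] lmap_words[OF hS] by auto
qed

definition induced :: "'b set \<Rightarrow> ('b word \<times> 'b word) set \<Rightarrow> ('a \<Rightarrow> 'b) \<Rightarrow> 'a word set \<Rightarrow> 'b word set" where
  "induced S' R' h C = pres_rel S' R' `` {lmap h (SOME w. w \<in> C)}"

lemma class_eq: "(x, y) \<in> pres_rel S R \<Longrightarrow> pres_rel S R `` {x} = pres_rel S R `` {y}"
  by (auto intro: pres_rel.sym pres_rel.trans)

lemma some_class: assumes "x \<in> words S" shows "(x, SOME w. w \<in> pres_rel S R `` {x}) \<in> pres_rel S R"
proof -
  have "x \<in> pres_rel S R `` {x}" using assms by (auto intro: pres_rel.refl)
  then have "(SOME w. w \<in> pres_rel S R `` {x}) \<in> pres_rel S R `` {x}" by (rule someI)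
  then show ?thesis by simp
qed

lemma induced_val:
  assumes hS: "h ` S \<subseteq> S'"
    and hR: "\<And>l r. (l, r) \<in> R \<Longrightarrow> l \<in> words S \<Longrightarrow> r \<in> words S \<Longrightarrow> (lmap h l, lmap h r) \<in> pres_rel S' R'"
    and x: "x \<in> words S"
  shows "induced S' R' h (pres_rel S R `` {x}) = pres_rel S' R' `` {lmap h x}"
proof -
  have "(lmap h x, lmap h (SOME w. w \<in> pres_rel S R `` {x})) \<in> pres_rel S' R'"
    using pres_map[OF hS hR some_class[OF x]] .
  then show ?thesis unfolding induced_def by (rule class_eq[OF pres_rel.sym])
qed

lemma hom_induced:
  assumes hS: "h ` S \<subseteq> S'"
    and hR: "\<And>l r. (l, r) \<in> R \<Longrightarrow> l \<in> words S \<Longrightarrow> r \<in> words S \<Longrightarrow> (lmap h l, lmap h r) \<in> pres_rel S' R'"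
  shows "induced S' R' h \<in> hom (presented_group S R) (presented_group S' R')"
proof -
  have carr: "induced S' R' h X \<in> words S' // pres_rel S' R'" if "X \<in> words S // pres_rel S R" for X
  proof -
    from that obtain x where x: "x \<in> words S" "X = pres_rel S R `` {x}" by (auto elim: quotientE)
    show ?thesis using induced_val[OF hS hR x(1)] x lmap_words[OF hS] by (auto intro: quotientI)
  qed
  have mul: "induced S' R' h (pres_rel S R `` {(SOME a. a \<in> X) @ (SOME b. b \<in> Y)}) =
     pres_rel S' R' `` {(SOME a. a \<in> induced S' R' h X) @ (SOME b. b \<in> induced S' R' h Y)}"
    if X: "X \<in> words S // pres_rel S R" and Y: "Y \<in> words S // pres_rel S R" for X Y
  proof -
    from X obtain x where x: "x \<in> words S" "X = pres_rel S R `` {x}" by (auto elim: quotientE)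
    from Y obtain y where y: "y \<in> words S" "Y = pres_rel S R `` {y}" by (auto elim: quotientE)
    define a where "a = (SOME a. a \<in> X)"
    define b where "b = (SOME b. b \<in> Y)"
    have xa: "(x, a) \<in> pres_rel S R" unfolding a_def x(2) by (rule some_class[OF x(1)])
    have yb: "(y, b) \<in> pres_rel S R" unfolding b_def y(2) by (rule some_class[OF y(1)])
    have aw: "a \<in> words S" "b \<in> words S" using pres_words[OF xa] pres_words[OF yb] by auto
    have IX: "induced S' R' h X = pres_rel S' R' `` {lmap h a}"
      using induced_val[OF hS hR x(1)] x(2) class_eq[OF pres_map[OF hS hR xa]] by simp
    have IY: "induced S' R' h Y = pres_rel S' R' `` {lmap h b}"
      using induced_val[OF hS hR y(1)] y(2) class_eq[OF pres_map[OF hS hR yb]] by simp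
    have e1: "(lmap h a, SOME w. w \<in> pres_rel S' R' `` {lmap h a}) \<in> pres_rel S' R'"
      by (rule some_class, rule lmap_words[OF hS aw(1)])
    have e2: "(lmap h b, SOME w. w \<in> pres_rel S' R' `` {lmap h b}) \<in> pres_rel S' R'"
      by (rule some_class, rule lmap_words[OF hS aw(2)])
    have "induced S' R' h (pres_rel S R `` {a @ b}) = pres_rel S' R' `` {lmap h a @ lmap h b}"
      using induced_val[OF hS hR, where x="a @ b"] aw by simp
    also have "\<dots> = pres_rel S' R' `` {(SOME w. w \<in> pres_rel S' R' `` {lmap h a}) @ (SOME w. w \<in> pres_rel S' R' `` {lmap h b})}"
      by (rule class_eq, rule pres_app[OF e1 e2])
    finally show ?thesis unfolding IX IY a_def b_def .
  qed
  have "induced S' R' h \<in> words S // pres_rel S R \<rightarrow> words S' // pres_rel S' R'" using carr by blast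
  then show ?thesis unfolding hom_def presented_group_def using mul by simp
qed


abbreviation P :: "nat \<Rightarrow> (gD word \<times> gD word) set" where
  "P n \<equiv> pres_rel (G2D_gens n) (G2D_rels n)"

lemma gA[simp]: "1 \<le> i \<Longrightarrow> i \<le> n \<Longrightarrow> 1 \<le> j \<Longrightarrow> j \<le> n \<Longrightarrow> i \<noteq> j \<Longrightarrow> A {i, j} \<in> G2D_gens n"
  unfolding G2D_gens_def G2_gens_def by blast

lemma gT[simp]: "1 \<le> i \<Longrightarrow> i \<le> n \<Longrightarrow> T i \<in> G2D_gens n"
  unfolding G2D_gens_def by auto

lemma gens_inv: "{i, j} \<in> G2_gens N \<Longrightarrow> 1 \<le> i \<and> i \<le> N \<and> 1 \<le> j \<and> j \<le> N \<and> i \<noteq> j"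
  unfolding G2_gens_def by (auto simp: doubleton_eq_iff)

lemma gens_intro: "1 \<le> i \<Longrightarrow> i \<le> N \<Longrightarrow> 1 \<le> j \<Longrightarrow> j \<le> N \<Longrightarrow> i \<noteq> j \<Longrightarrow> {i, j} \<in> G2_gens N"
  unfolding G2_gens_def by blast

lemma r_aa: "1 \<le> i \<Longrightarrow> i \<le> n \<Longrightarrow> 1 \<le> j \<Longrightarrow> j \<le> n \<Longrightarrow> i \<noteq> j \<Longrightarrow>
  ([lt (A {i, j}), lt (A {i, j})], []) \<in> G2D_rels n"
  unfolding G2D_rels_def
  by (rule UnI1, rule UnI1, rule UnI1, rule UnI1, rule UnI1, rule UnI1, use gens_intro[of i n j] in blast)

lemma r_acomm: "{i, j, k, l} \<subseteq> {1..n} \<Longrightarrow> card {i, j, k, l} = 4 \<Longrightarrow>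
  ([lt (A {i, j}), lt (A {k, l})], [lt (A {k, l}), lt (A {i, j})]) \<in> G2D_rels n"
  unfolding G2D_rels_def by (rule UnI1, rule UnI1, rule UnI1, rule UnI1, rule UnI1, rule UnI2, blast)

lemma r_tri: "{i, j, k} \<subseteq> {1..n} \<Longrightarrow> card {i, j, k} = 3 \<Longrightarrow>
  ([lt (A {i, j}), lt (A {i, k}), lt (A {j, k})], [lt (A {j, k}), lt (A {i, k}), lt (A {i, j})]) \<in> G2D_rels n"
  unfolding G2D_rels_def by (rule UnI1, rule UnI1, rule UnI1, rule UnI1, rule UnI2, blast)

lemma r_tt: "1 \<le> i \<Longrightarrow> i \<le> n \<Longrightarrow> ([lt (T i), lt (T i)], []) \<in> G2D_rels n"
  unfolding G2D_rels_def by auto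

lemma r_tc: "1 \<le> i \<Longrightarrow> i \<le> n \<Longrightarrow> 1 \<le> j \<Longrightarrow> j \<le> n \<Longrightarrow>
  ([lt (T i), lt (T j)], [lt (T j), lt (T i)]) \<in> G2D_rels n"
  unfolding G2D_rels_def by auto

lemma r6: "1 \<le> i \<Longrightarrow> i \<le> n \<Longrightarrow> 1 \<le> j \<Longrightarrow> j \<le> n \<Longrightarrow> i \<noteq> j \<Longrightarrow>
  ([lt (T i), lt (T j), lt (A {i, j}), lt (T j), lt (T i)], [lt (A {i, j})]) \<in> G2D_rels n"
  unfolding G2D_rels_def using gens_intro[of i n j] by blast

lemma r7: "1 \<le> i \<Longrightarrow> i \<le> n \<Longrightarrow> 1 \<le> j \<Longrightarrow> j \<le> n \<Longrightarrow> 1 \<le> k \<Longrightarrow> k \<le> n \<Longrightarrow>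
  i \<noteq> j \<Longrightarrow> i \<noteq> k \<Longrightarrow> j \<noteq> k \<Longrightarrow>
  ([lt (A {i, j}), lt (T k)], [lt (T k), lt (A {i, j})]) \<in> G2D_rels n"
proof -
  assume a: "1 \<le> i" "i \<le> n" "1 \<le> j" "j \<le> n" "1 \<le> k" "k \<le> n" "i \<noteq> j" "i \<noteq> k" "j \<noteq> k"
  then have "{i, j, k} \<subseteq> {1..n} \<and> card {i, j, k} = 3" by auto
  then show ?thesis unfolding G2D_rels_def by blast
qed

lemma relP: "(l, r) \<in> G2D_rels n \<Longrightarrow> l \<in> words (G2D_gens n) \<Longrightarrow> r \<in> words (G2D_gens n) \<Longrightarrow> (l, r) \<in> P n"
  using pres_rel.rel[of "[]" "G2D_gens n" "[]" l r "G2D_rels n"] by simp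

lemma lemM:
  assumes "1 \<le> i" "i \<le> n" "1 \<le> j" "j \<le> n" "i \<noteq> j"
  shows "([lt (A {i, j}), lt (T i), lt (T j)], [lt (T j), lt (T i), lt (A {i, j})]) \<in> P n"
proof -
  have 1: "([lt (A {i, j}), lt (T i), lt (T j)],
     [lt (T i), lt (T j), lt (A {i, j}), lt (T j), lt (T i), lt (T i), lt (T j)]) \<in> P n"
    using pres_rel.rel[of "[]" "G2D_gens n" "[lt (T i), lt (T j)]"
        "[lt (T i), lt (T j), lt (A {i, j}), lt (T j), lt (T i)]" "[lt (A {i, j})]" "G2D_rels n"]
      r6[OF assms] assms by (auto intro: pres_rel.sym)
  have 2: "([lt (T i), lt (T j), lt (A {i, j}), lt (T j), lt (T i), lt (T i), lt (T j)],
     [lt (T i), lt (T j), lt (A {i, j}), lt (T j), lt (T j)]) \<in> P n"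
    using pres_rel.rel[of "[lt (T i), lt (T j), lt (A {i, j}), lt (T j)]" "G2D_gens n" "[lt (T j)]"
        "[lt (T i), lt (T i)]" "[]" "G2D_rels n"] r_tt[of i n] assms by auto
  have 3: "([lt (T i), lt (T j), lt (A {i, j}), lt (T j), lt (T j)],
     [lt (T i), lt (T j), lt (A {i, j})]) \<in> P n"
    using pres_rel.rel[of "[lt (T i), lt (T j), lt (A {i, j})]" "G2D_gens n" "[]"
        "[lt (T j), lt (T j)]" "[]" "G2D_rels n"] r_tt[of j n] assms by auto
  have 4: "([lt (T i), lt (T j), lt (A {i, j})], [lt (T j), lt (T i), lt (A {i, j})]) \<in> P n"
    using pres_rel.rel[of "[]" "G2D_gens n" "[lt (A {i, j})]"
        "[lt (T i), lt (T j)]" "[lt (T j), lt (T i)]" "G2D_rels n"] r_tc[of i n j] assms by auto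
  show ?thesis using 1 2 3 4 by (blast intro: pres_rel.trans)
qed

lemma lemL:
  assumes "1 \<le> i" "i \<le> n" "1 \<le> k" "k \<le> n" "i \<noteq> k"
  shows "([lt (T i), lt (A {i, k}), lt (T k)], [lt (T k), lt (A {i, k}), lt (T i)]) \<in> P n"
proof -
  have 1: "([lt (T k), lt (A {i, k}), lt (T i)],
     [lt (T k), lt (T i), lt (T k), lt (A {i, k}), lt (T k), lt (T i), lt (T i)]) \<in> P n"
    using pres_rel.rel[of "[lt (T k)]" "G2D_gens n" "[lt (T i)]"
        "[lt (T i), lt (T k), lt (A {i, k}), lt (T k), lt (T i)]" "[lt (A {i, k})]" "G2D_rels n"]
      r6[OF assms] assms by (auto intro: pres_rel.sym)
  have 2: "([lt (T k), lt (T i), lt (T k), lt (A {i, k}), lt (T k), lt (T i), lt (T i)],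
     [lt (T k), lt (T k), lt (T i), lt (A {i, k}), lt (T k), lt (T i), lt (T i)]) \<in> P n"
    using pres_rel.rel[of "[lt (T k)]" "G2D_gens n" "[lt (A {i, k}), lt (T k), lt (T i), lt (T i)]"
        "[lt (T i), lt (T k)]" "[lt (T k), lt (T i)]" "G2D_rels n"] r_tc[of i n k] assms by auto
  have 3: "([lt (T k), lt (T k), lt (T i), lt (A {i, k}), lt (T k), lt (T i), lt (T i)],
     [lt (T i), lt (A {i, k}), lt (T k), lt (T i), lt (T i)]) \<in> P n"
    using pres_rel.rel[of "[]" "G2D_gens n" "[lt (T i), lt (A {i, k}), lt (T k), lt (T i), lt (T i)]"
        "[lt (T k), lt (T k)]" "[]" "G2D_rels n"] r_tt[of k n] assms by auto
  have 4: "([lt (T i), lt (A {i, k}), lt (T k), lt (T i), lt (T i)],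
     [lt (T i), lt (A {i, k}), lt (T k)]) \<in> P n"
    using pres_rel.rel[of "[lt (T i), lt (A {i, k}), lt (T k)]" "G2D_gens n" "[]"
        "[lt (T i), lt (T i)]" "[]" "G2D_rels n"] r_tt[of i n] assms by auto
  show ?thesis using 1 2 3 4 by (blast intro: pres_rel.trans pres_rel.sym)
qed

definition fmap :: "nat \<Rightarrow> nat set \<Rightarrow> gD" where
  "fmap n s = (if Suc n \<in> s then T (Min (s - {Suc n})) else A s)"

lemma fA[simp]: "i \<le> n \<Longrightarrow> j \<le> n \<Longrightarrow> fmap n {i, j} = A {i, j}"
  unfolding fmap_def by auto

lemma fT1[simp]: "i \<noteq> Suc n \<Longrightarrow> fmap n {i, Suc n} = T i"
proof -
  assume "i \<noteq> Suc n"
  then have "{i, Suc n} - {Suc n} = {i}" by auto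
  then show ?thesis unfolding fmap_def by simp
qed

lemma fT2[simp]: "i \<noteq> Suc n \<Longrightarrow> fmap n {Suc n, i} = T i"
  using fT1[of i n] by (simp add: insert_commute)


lemma card4_distinct: "card {i, j, k, l :: nat} = 4 \<Longrightarrow> i \<noteq> j \<and> i \<noteq> k \<and> i \<noteq> l \<and> j \<noteq> k \<and> j \<noteq> l \<and> k \<noteq> l"
  by (auto simp: card_insert_if split: if_splits)

lemma card3_distinct: "card {i, j, k :: nat} = 3 \<Longrightarrow> i \<noteq> j \<and> i \<noteq> k \<and> j \<noteq> k"
  by (auto simp: card_insert_if split: if_splits)

lemma hS: "fmap n ` G2_gens (Suc n) \<subseteq> G2D_gens n"
proof
  fix g assume "g \<in> fmap n ` G2_gens (Suc n)"
  then obtain i j where ij: "{i, j} \<in> G2_gens (Suc n)" "g = fmap n {i, j}" unfolding G2_gens_def by blast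
  from gens_inv[OF ij(1)] have r: "1 \<le> i" "i \<le> Suc n" "1 \<le> j" "j \<le> Suc n" "i \<noteq> j" by auto
  show "g \<in> G2D_gens n"
  proof (cases "i = Suc n")
    case True then show ?thesis using ij r by auto
  next
    case False
    then show ?thesis using ij r by (cases "j = Suc n") auto
  qed
qed

lemma hR: "(l, r) \<in> G2_rels (Suc n) \<Longrightarrow> (lmap (fmap n) l, lmap (fmap n) r) \<in> P n"
proof (unfold G2_rels_def, elim UnE CollectE exE conjE)
  fix i j assume e: "(l, r) = ([lt {i, j}, lt {i, j}], [])" and g: "{i, j} \<in> G2_gens (Suc n)"
  from gens_inv[OF g] have r: "1 \<le> i" "i \<le> Suc n" "1 \<le> j" "j \<le> Suc n" "i \<noteq> j" by auto
  show ?thesis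
  proof (cases "i = Suc n")
    case True then show ?thesis using e r by (auto intro!: relP r_tt)
  next
    case False
    show ?thesis
    proof (cases "j = Suc n")
      case True then show ?thesis using e r False by (auto intro!: relP r_tt)
    next
      case False2: False
      then show ?thesis using e r False by (auto intro!: relP r_aa)
    qed
  qed
next
  fix i j k m assume e: "(l, r) = ([lt {i, j}, lt {k, m}], [lt {k, m}, lt {i, j}])"
    and s: "{i, j, k, m} \<subseteq> {1..Suc n}" and c: "card {i, j, k, m} = 4"
  from card4_distinct[OF c] s have d: "i \<noteq> j" "i \<noteq> k" "i \<noteq> m" "j \<noteq> k" "j \<noteq> m" "k \<noteq> m"
    "1 \<le> i" "i \<le> Suc n" "1 \<le> j" "j \<le> Suc n" "1 \<le> k" "k \<le> Suc n" "1 \<le> m" "m \<le> Suc n" by auto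
  consider "i = Suc n" | "j = Suc n" | "k = Suc n" | "m = Suc n" | "i \<le> n" "j \<le> n" "k \<le> n" "m \<le> n"
    using d unfolding le_Suc_eq by blast
  then show ?thesis
  proof cases
    case 1
    have "([lt (A {k, m}), lt (T j)], [lt (T j), lt (A {k, m})]) \<in> P n" using d 1 by (intro relP r7) auto
    then have "([lt (T j), lt (A {k, m})], [lt (A {k, m}), lt (T j)]) \<in> P n" by (rule pres_rel.sym)
    then show ?thesis using e d 1 by simp
  next
    case 2
    have "([lt (A {k, m}), lt (T i)], [lt (T i), lt (A {k, m})]) \<in> P n" using d 2 by (intro relP r7) auto
    then have "([lt (T i), lt (A {k, m})], [lt (A {k, m}), lt (T i)]) \<in> P n" by (rule pres_rel.sym)
    then show ?thesis using e d 2 by (simp add: insert_commute)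
  next
    case 3
    have "([lt (A {i, j}), lt (T m)], [lt (T m), lt (A {i, j})]) \<in> P n" using d 3 by (intro relP r7) auto
    then show ?thesis using e d 3 by (simp add: insert_commute)
  next
    case 4
    have "([lt (A {i, j}), lt (T k)], [lt (T k), lt (A {i, j})]) \<in> P n" using d 4 by (intro relP r7) auto
    then show ?thesis using e d 4 by simp
  next
    case 5
    then have "{i, j, k, m} \<subseteq> {1..n}" using d by auto
    then show ?thesis using e d 5 c by (auto intro!: relP r_acomm)
  qed
next
  fix i j k assume e: "(l, r) = ([lt {i, j}, lt {i, k}, lt {j, k}], [lt {j, k}, lt {i, k}, lt {i, j}])"
    and s: "{i, j, k} \<subseteq> {1..Suc n}" and c: "card {i, j, k} = 3"
  from card3_distinct[OF c] s have d: "i \<noteq> j" "i \<noteq> k" "j \<noteq> k"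
    "1 \<le> i" "i \<le> Suc n" "1 \<le> j" "j \<le> Suc n" "1 \<le> k" "k \<le> Suc n" by auto
  consider "i = Suc n" | "j = Suc n" | "k = Suc n" | "i \<le> n" "j \<le> n" "k \<le> n"
    using d unfolding le_Suc_eq by blast
  then show ?thesis
  proof cases
    case 1
    have "([lt (A {k, j}), lt (T k), lt (T j)], [lt (T j), lt (T k), lt (A {k, j})]) \<in> P n"
      using d 1 by (intro lemM) auto
    then have "([lt (T j), lt (T k), lt (A {k, j})], [lt (A {k, j}), lt (T k), lt (T j)]) \<in> P n"
      by (rule pres_rel.sym)
    then show ?thesis using e d 1 by (simp add: insert_commute)
  next
    case 2
    have "([lt (T i), lt (A {i, k}), lt (T k)], [lt (T k), lt (A {i, k}), lt (T i)]) \<in> P n"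
      using d 2 by (intro lemL) auto
    then show ?thesis using e d 2 by auto
  next
    case 3
    have "([lt (A {i, j}), lt (T i), lt (T j)], [lt (T j), lt (T i), lt (A {i, j})]) \<in> P n"
      using d 3 by (intro lemM) auto
    then show ?thesis using e d 3 by auto
  next
    case 4
    then have "{i, j, k} \<subseteq> {1..n}" using d by auto
    then show ?thesis using e d 4 c by (auto intro!: relP r_tri)
  qed
qed

theorem mainTheorem6:
  fixes n :: nat
  assumes "n > 2"
  shows "\<exists>\<omega> \<in> hom (G2 (n + 1)) (G2D n).
           (\<forall>i j. 1 \<le> i \<and> i < j \<and> j \<le> n \<longrightarrow> \<omega> (G2_a (n + 1) i j) = G2D_a n i j)
         \<and> (\<forall>i. 1 \<le> i \<and> i \<le> n \<longrightarrow> \<omega> (G2_a (n + 1) i (n + 1)) = G2D_tau n i)"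
proof
  let ?w = "induced (G2D_gens n) (G2D_rels n) (fmap n)"
  have hR': "\<And>l r. (l, r) \<in> G2_rels (Suc n) \<Longrightarrow> l \<in> words (G2_gens (Suc n)) \<Longrightarrow> r \<in> words (G2_gens (Suc n))
     \<Longrightarrow> (lmap (fmap n) l, lmap (fmap n) r) \<in> P n" using hR by blast
  show "?w \<in> hom (G2 (n + 1)) (G2D n)"
    unfolding G2_def G2D_def using hom_induced[OF hS hR'] by simp
  have val: "?w (G2_a (n + 1) i j) = pres_rel (G2D_gens n) (G2D_rels n) `` {[(fmap n {i, j}, True)]}"
    if "1 \<le> i" "i \<le> Suc n" "1 \<le> j" "j \<le> Suc n" "i \<noteq> j" for i j
  proof -
    have "[lt {i, j}] \<in> words (G2_gens (Suc n))" using gens_intro[OF that] by simp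
    from induced_val[OF hS hR' this] show ?thesis unfolding G2_a_def pgen_def by simp
  qed
  show "(\<forall>i j. 1 \<le> i \<and> i < j \<and> j \<le> n \<longrightarrow> ?w (G2_a (n + 1) i j) = G2D_a n i j)
         \<and> (\<forall>i. 1 \<le> i \<and> i \<le> n \<longrightarrow> ?w (G2_a (n + 1) i (n + 1)) = G2D_tau n i)"
    using val by (auto simp: G2D_a_def G2D_tau_def pgen_def)
qed

end
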